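(* Let $\mathcal X=\{X_1,\dots,X_n\}$, $n\in\mathbb N$, be a multi-set of real symmetric $2\times2$ matrices, and let $\lambda_1$ be the unique largest eigenvalue of all matrices of $\mathcal X$, belonging to $X_1$, with normalised eigenvector $u_1$. Then the log-exp-supremum of $\mathcal X$ has the representation $$S=\lim_{m\to\infty}\frac1m\log\sum_{i=1}^n\exp(mX_i)=\lambda_1u_1u_1^{\mathsf T}+\mu_*v_1v_1^{\mathsf T},$$ where $v_1$ is the normalised vector perpendicular to $u_1$ and $\mu_*$ is the largest eigenvalue of $\mathcal X$ (other than the occurrence $\lambda_1$) whose associated normalised eigenvector is not aligned with $u_1$.
   Context: $\exp$ and $\log$ denote the matrix exponential and matrix logarithm. Every real symmetric $2\times2$ matrix $X_i$ is written in spectral form $X_i=\lambda_i u_iu_i^{\mathsf T}+\mu_i v_iv_i^{\mathsf T}$ with $\lambda_i\ge\mu_i$, $u_i=(\cos\varphi_i,\sin\varphi_i)^{\mathsf T}$, $v_i=(-\sin\varphi_i,\cos\varphi_i)^{\mathsf T}$, $\varphi_i\in[-\pi/2,\pi/2]$. "The eigenvalues of $\mathcal X$" means the multi-set of all $2n$ numbers $\lambda_1,\mu_1,\dots,\lambda_n,\mu_n$, each with its associated eigenvector ($u_i$ for $\lambda_i$, $v_i$ for $\mu_i$); an eigenvalue is unique if it occurs exactly once in this multi-set. Two unit vectors are aligned if they are equal up to sign. The log-exp-supremum (LES) of $\mathcal X$ is $\mathrm{Sup}_{\mathrm{LE}}(\mathcal X):=\lim_{m\to\infty}\frac1m\log\sum_{i=1}^n\exp(mX_i)$.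 *)

theory Defs
  imports "HOL-Analysis.Analysis"
begin

type_synonym mat2 = "real^2^2"

primrec mpow :: "mat2 \<Rightarrow> nat \<Rightarrow> mat2" where
  "mpow A 0 = mat 1"
| "mpow A (Suc k) = A ** mpow A k"

definition mexp :: "mat2 \<Rightarrow> mat2" where
  "mexp A = (\<Sum>k. (1 / fact k) *\<^sub>R mpow A k)"

definition mlog :: "mat2 \<Rightarrow> mat2" where
  "mlog M = (THE L. transpose L = L \<and> mexp L = M)"

definition is_LES :: "nat \<Rightarrow> (nat \<Rightarrow> mat2) \<Rightarrow> mat2 \<Rightarrow> bool" where
  "is_LES n X S \<longleftrightarrow>
     ((\<lambda>m::real. (1 / m) *\<^sub>R mlog (\<Sum>i\<in>{1..n}. mexp (m *\<^sub>R X i))) \<longlongrightarrow> S) at_top"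

definition outer :: "real^2 \<Rightarrow> mat2" where
  "outer u = (\<chi> i j. u $ i * u $ j)"

definition uvec :: "real \<Rightarrow> real^2" where
  "uvec \<phi> = vector [cos \<phi>, sin \<phi>]"

definition vvec :: "real \<Rightarrow> real^2" where
  "vvec \<phi> = vector [- sin \<phi>, cos \<phi>]"

definition aligned :: "real^2 \<Rightarrow> real^2 \<Rightarrow> bool" where
  "aligned a b \<longleftrightarrow> a = b \<or> a = - b"

end

theory Submission
  imports Defs
begin

lemma mat2_eq: "(A::mat2) = B \<longleftrightarrow> A$1$1 = B$1$1 \<and> A$1$2 = B$1$2 \<and> A$2$1 = B$2$1 \<and> A$2$2 = B$2$2"
  by (auto simp: vec_eq_iff forall_2)
lemma mm_comp: "((A::mat2) ** B)$i$j = A$i$1 * B$1$j + A$i$2 * B$2$j"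
  by (simp add: matrix_matrix_mult_def sum_2)
lemma outer_comp: "outer u $ i $ j = u$i * u$j" by (simp add: outer_def)
lemma uvec_comp[simp]: "uvec p $ 1 = cos p" "uvec p $ 2 = sin p" by (simp_all add: uvec_def)
lemma vvec_comp[simp]: "vvec p $ 1 = - sin p" "vvec p $ 2 = cos p" by (simp_all add: vvec_def)
lemma mat_comp: "(mat a :: mat2) $ 1 $ 1 = a" "(mat a :: mat2) $ 1 $ 2 = 0" "(mat a :: mat2) $ 2 $ 1 = 0" "(mat a :: mat2) $ 2 $ 2 = a"
  by (simp_all add: mat_def)
lemmas cs = mat2_eq mm_comp outer_comp mat_comp

lemma mm_scaleR_l: "((a::real) *\<^sub>R (A::mat2)) ** (B::mat2) = a *\<^sub>R (A ** B)" by (subst mat2_eq) (simp add: mm_comp algebra_simps)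
lemma mm_scaleR_r: "(A::mat2) ** (a *\<^sub>R (B::mat2)) = a *\<^sub>R (A ** B)" by (subst mat2_eq) (simp add: mm_comp algebra_simps)
lemma mm_add_l: "((A::mat2) + B) ** (C::mat2) = A ** C + B ** C" by (subst mat2_eq) (simp add: mm_comp algebra_simps)
lemma mm_add_r: "(A::mat2) ** (B + (C::mat2)) = A ** B + A ** C" by (subst mat2_eq) (simp add: mm_comp algebra_simps)
lemma mm_diff_l: "((A::mat2) - B) ** (C::mat2) = A ** C - B ** C" by (subst mat2_eq) (simp add: mm_comp algebra_simps)
lemma mm_diff_r: "(A::mat2) ** (B - (C::mat2)) = A ** B - A ** C" by (subst mat2_eq) (simp add: mm_comp algebra_simps)
lemma mm_0_l: "(0::mat2) ** (B::mat2) = 0" by (simp add: cs)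
lemma mm_0_r: "(B::mat2) ** (0::mat2) = 0" by (simp add: cs)
lemmas mm = mm_scaleR_l mm_scaleR_r mm_add_l mm_add_r mm_diff_l mm_diff_r mm_0_l mm_0_r

definition projsys :: "mat2 \<Rightarrow> mat2 \<Rightarrow> bool" where
  "projsys P Q \<longleftrightarrow> P ** P = P \<and> Q ** Q = Q \<and> P ** Q = 0 \<and> Q ** P = 0 \<and> P + Q = mat 1"

lemma mpow_proj: assumes "projsys P Q"
  shows "mpow (a *\<^sub>R P + b *\<^sub>R Q) k = a^k *\<^sub>R P + b^k *\<^sub>R Q"
proof (induction k)
  case 0 then show ?case using assms by (simp add: projsys_def)
next
  case (Suc k) then show ?case using assms by (simp add: projsys_def mm algebra_simps)
qed

lemma mexp_proj: assumes "projsys P Q"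
  shows "mexp (a *\<^sub>R P + b *\<^sub>R Q) = exp a *\<^sub>R P + exp b *\<^sub>R Q"
proof -
  have "(\<lambda>k. (a^k /\<^sub>R fact k) *\<^sub>R P + (b^k /\<^sub>R fact k) *\<^sub>R Q) sums (exp a *\<^sub>R P + exp b *\<^sub>R Q)"
    by (intro sums_add sums_scaleR_left exp_converges)
  moreover have "(\<lambda>k. (1 / fact k) *\<^sub>R mpow (a *\<^sub>R P + b *\<^sub>R Q) k) = (\<lambda>k. (a^k /\<^sub>R fact k) *\<^sub>R P + (b^k /\<^sub>R fact k) *\<^sub>R Q)"
    by (simp add: mpow_proj[OF assms] scaleR_add_right divide_inverse_commute)
  ultimately show ?thesis unfolding mexp_def by (simp add: sums_iff)
qed

lemma scaleR_proj0: assumes "c *\<^sub>R (P::mat2) = 0" "P \<noteq> 0" shows "c = 0"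
  using assms by simp

lemma proj_unique:
  assumes ps: "projsys P Q" and ps': "projsys P' Q'" and nz: "P \<noteq> 0" "Q \<noteq> 0" "P' \<noteq> 0" "Q' \<noteq> 0"
    and ab: "a > b" and ab': "a' \<ge> b'"
    and eq: "a *\<^sub>R P + b *\<^sub>R Q = a' *\<^sub>R P' + b' *\<^sub>R Q'"
  shows "a' = a \<and> b' = b \<and> P' = P"
proof -
  have P: "P ** P = P" "Q ** Q = Q" "P ** Q = 0" "Q ** P = 0" "P + Q = mat 1" using ps by (auto simp: projsys_def)
  have P': "P' ** P' = P'" "Q' ** Q' = Q'" "P' ** Q' = 0" "Q' ** P' = 0" "P' + Q' = mat 1" using ps' by (auto simp: projsys_def)
  define M where "M = a *\<^sub>R P + b *\<^sub>R Q"
  have e1: "M - a *\<^sub>R mat 1 = (b - a) *\<^sub>R Q" unfolding M_def P(5)[symmetric] by (simp add: algebra_simps)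
  have e2: "M - b *\<^sub>R mat 1 = (a - b) *\<^sub>R P" unfolding M_def P(5)[symmetric] by (simp add: algebra_simps)
  have z: "(M - a *\<^sub>R mat 1) ** (M - b *\<^sub>R mat 1) = 0" unfolding e1 e2 by (simp add: mm P)
  have e1': "M - a *\<^sub>R mat 1 = (a' - a) *\<^sub>R P' + (b' - a) *\<^sub>R Q'" unfolding M_def eq P'(5)[symmetric] by (simp add: algebra_simps)
  have e2': "M - b *\<^sub>R mat 1 = (a' - b) *\<^sub>R P' + (b' - b) *\<^sub>R Q'" unfolding M_def eq P'(5)[symmetric] by (simp add: algebra_simps)
  have z': "((a' - a) * (a' - b)) *\<^sub>R P' + ((b' - a) * (b' - b)) *\<^sub>R Q' = 0"
    using z unfolding e1' e2' by (simp add: mm P' algebra_simps)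
  have "P' ** (((a' - a) * (a' - b)) *\<^sub>R P' + ((b' - a) * (b' - b)) *\<^sub>R Q') = ((a' - a) * (a' - b)) *\<^sub>R P'"
    by (simp add: mm P')
  then have "(a' - a) * (a' - b) = 0" using z' nz(3) by (simp add: mm_0_r)
  then have A: "a' = a \<or> a' = b" by simp
  have "Q' ** (((a' - a) * (a' - b)) *\<^sub>R P' + ((b' - a) * (b' - b)) *\<^sub>R Q') = ((b' - a) * (b' - b)) *\<^sub>R Q'"
    by (simp add: mm P')
  then have "(b' - a) * (b' - b) = 0" using z' nz(4) by (simp add: mm_0_r)
  then have B: "b' = a \<or> b' = b" by simp
  have "\<not> (a' = b')"
  proof
    assume "a' = b'"
    then have "M = a' *\<^sub>R mat 1" unfolding M_def eq P'(5)[symmetric] by (simp add: algebra_simps)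
    then have "a *\<^sub>R P + b *\<^sub>R Q = a' *\<^sub>R P + a' *\<^sub>R Q" unfolding M_def P(5)[symmetric] by (simp add: algebra_simps)
    then have h: "(a - a') *\<^sub>R P = (a' - b) *\<^sub>R Q" by (simp add: algebra_simps)
    have "P ** ((a - a') *\<^sub>R P) = P ** ((a' - b) *\<^sub>R Q)" using h by simp
    then have "(a - a') *\<^sub>R P = 0" by (simp add: mm P)
    then have "a = a'" using nz(1) by simp
    have "Q ** ((a - a') *\<^sub>R P) = Q ** ((a' - b) *\<^sub>R Q)" using h by simp
    then have "(a' - b) *\<^sub>R Q = 0" by (simp add: mm P)
    then have "a' = b" using nz(2) by simp
    with \<open>a = a'\<close> ab show False by simp
  qed
  with A B ab ab' have ha: "a' = a" and hb: "b' = b" by auto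
  have "(a - b) *\<^sub>R P = (a - b) *\<^sub>R P'" using e2 e2' ha hb by auto
  then have "P' = P" using ab by auto
  with ha hb show ?thesis by simp
qed
definition mk2 :: "real \<Rightarrow> real \<Rightarrow> real \<Rightarrow> real \<Rightarrow> mat2" where
  "mk2 a b c d = (\<chi> i j. if i = 1 then (if j = 1 then a else b) else (if j = 1 then c else d))"
lemma mk2_comp[simp]: "mk2 a b c d $ 1 $ 1 = a" "mk2 a b c d $ 1 $ 2 = b" "mk2 a b c d $ 2 $ 1 = c" "mk2 a b c d $ 2 $ 2 = d"
  by (simp_all add: mk2_def)
lemma transpose_comp: "transpose (A::mat2) $ i $ j = A $ j $ i" by (simp add: transpose_def)

lemma sym_decomp:
  assumes "transpose L = (L::mat2)"
  shows "\<exists>a b P Q. projsys P Q \<and> P \<noteq> 0 \<and> Q \<noteq> 0 \<and> a \<ge> b \<and> L = a *\<^sub>R P + b *\<^sub>R Q"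
proof -
  have r: "L$2$1 = L$1$2" using assms by (metis transpose_comp)
  define c where "c = (L$1$1 + L$2$2)/2"
  define d where "d = (L$1$1 - L$2$2)/2"
  define r where "r = L$1$2"
  define s where "s = sqrt (d^2 + r^2)"
  have s2: "s^2 = d^2 + r^2" unfolding s_def by simp
  have s0: "s \<ge> 0" unfolding s_def by simp
  show ?thesis
  proof (cases "s = 0")
    case True
    then have "d^2 + r^2 = 0" using s2 by simp
    then have "d = 0" "r = 0" by (simp_all add: sum_power2_eq_zero_iff)
    hence L: "L = c *\<^sub>R mk2 1 0 0 0 + c *\<^sub>R mk2 0 0 0 1"
      using r by (subst mat2_eq) (simp add: c_def d_def r_def)
    have "projsys (mk2 1 0 0 0) (mk2 0 0 0 1)"
      unfolding projsys_def by (simp add: cs)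
    moreover have "mk2 1 0 0 0 \<noteq> 0" "mk2 0 0 0 1 \<noteq> 0" by (simp_all add: mat2_eq)
    ultimately show ?thesis using L by blast
  next
    case False
    hence sp: "s > 0" using s0 by simp
    define P where "P = mk2 ((1 + d / s)/2) (r/(2 * s)) (r/(2 * s)) ((1 - d / s)/2)"
    define Q where "Q = mk2 ((1 - d / s)/2) (-r/(2 * s)) (-r/(2 * s)) ((1 + d / s)/2)"
    have ps: "projsys P Q" unfolding projsys_def P_def Q_def using sp s2
      by (simp add: cs field_simps power2_eq_square; intro conjI; algebra)
    have "P \<noteq> 0" "Q \<noteq> 0" unfolding P_def Q_def by (auto simp: mat2_eq)
    moreover have "L = (c + s) *\<^sub>R P + (c - s) *\<^sub>R Q" unfolding P_def Q_def using sp r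
      by (subst mat2_eq) (simp add: c_def d_def r_def field_simps)
    moreover have "c + s \<ge> c - s" using sp by simp
    ultimately show ?thesis using ps by blast
  qed
qed
lemma mlog_eq:
  assumes ps: "projsys P Q" and nz: "P \<noteq> 0" "Q \<noteq> 0" and sym: "transpose P = P" "transpose Q = Q"
    and ab: "a > b"
  shows "mlog (exp a *\<^sub>R P + exp b *\<^sub>R Q) = a *\<^sub>R P + b *\<^sub>R Q"
  unfolding mlog_def
proof (rule the_equality)
  have s1: "P$2$1 = P$1$2" "Q$2$1 = Q$1$2" using sym by (metis transpose_comp)+
  show "transpose (a *\<^sub>R P + b *\<^sub>R Q) = a *\<^sub>R P + b *\<^sub>R Q \<and> mexp (a *\<^sub>R P + b *\<^sub>R Q) = exp a *\<^sub>R P + exp b *\<^sub>R Q"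
    using s1 by (simp add: mexp_proj[OF ps] mat2_eq transpose_comp)
next
  fix L assume h: "transpose L = L \<and> mexp L = exp a *\<^sub>R P + exp b *\<^sub>R Q"
  then obtain a' b' P' Q' where d: "projsys P' Q'" "P' \<noteq> 0" "Q' \<noteq> 0" "a' \<ge> b'" "L = a' *\<^sub>R P' + b' *\<^sub>R Q'"
    using sym_decomp by blast
  have "exp a *\<^sub>R P + exp b *\<^sub>R Q = exp a' *\<^sub>R P' + exp b' *\<^sub>R Q'"
    using h d by (simp add: mexp_proj)
  from proj_unique[OF ps d(1) nz d(2,3) _ _ this] ab d(4)
  have u: "a' = a" "b' = b" "P' = P" by auto
  have "Q' = Q" using ps d(1) u(3) unfolding projsys_def by (metis add_diff_cancel_left')
  then show "L = a *\<^sub>R P + b *\<^sub>R Q" using d u by simp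
qed
lemma spec2:
  fixes M :: mat2
  assumes sy: "M$2$1 = M$1$2" and lt: "s2 < s1" and tr: "s1 + s2 = M$1$1 + M$2$2"
    and dt: "s1 * s2 = M$1$1 * M$2$2 - M$1$2 * M$2$1"
  defines "P \<equiv> (1/(s1 - s2)) *\<^sub>R (M - s2 *\<^sub>R mat 1)"
  shows "projsys P (mat 1 - P)" "P \<noteq> 0" "mat 1 - P \<noteq> 0" "transpose P = P" "transpose (mat 1 - P) = mat 1 - P"
    "M = s1 *\<^sub>R P + s2 *\<^sub>R (mat 1 - P)"
proof -
  have d: "s1 - s2 \<noteq> 0" using lt by simp
  have m22: "M$2$2 = s1 + s2 - M$1$1" using tr by simp
  have m12: "M$1$2 * M$1$2 = (s1 - M$1$1) * (M$1$1 - s2)" using dt sy m22 by (simp add: algebra_simps)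
  define R where "R = M - s2 *\<^sub>R mat 1"
  have RR: "R ** R = (s1 - s2) *\<^sub>R R" unfolding R_def
    apply (simp add: cs sy m22)
    apply (intro conjI; (simp add: algebra_simps)?; (use m12 in algebra)?)
    done
  have PP: "P ** P = P" unfolding P_def R_def[symmetric] using d
    by (simp add: mm RR)
  show "projsys P (mat 1 - P)" unfolding projsys_def
    by (simp add: mm PP)
  show "P \<noteq> 0"
  proof
    assume "P = 0"
    hence "M$1$1 = s2" "M$2$2 = s2" unfolding P_def using d by (auto simp: mat2_eq mat_comp)
    thus False using tr lt by simp
  qed
  show "mat 1 - P \<noteq> 0"
  proof
    assume "mat 1 - P = 0"
    hence "P = mat 1" by simp
    moreover have "(s1 - s2) *\<^sub>R P = M - s2 *\<^sub>R mat 1" unfolding P_def using d by simp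
    ultimately have "M - s2 *\<^sub>R mat 1 = (s1 - s2) *\<^sub>R mat 1" by simp
    hence "M$1$1 = s1" "M$2$2 = s1" by (auto simp: mat2_eq mat_comp)
    thus False using tr lt by simp
  qed
  show "transpose P = P" "transpose (mat 1 - P) = mat 1 - P" unfolding P_def
    by (simp_all add: mat2_eq transpose_comp mat_comp sy)
  have "(s1 - s2) *\<^sub>R P = M - s2 *\<^sub>R mat 1" unfolding P_def using d by simp
  then show "M = s1 *\<^sub>R P + s2 *\<^sub>R (mat 1 - P)" by (simp add: algebra_simps)
qed

lemma exp_neg_lim: assumes "(c::real) < 0" shows "((\<lambda>m::real. exp (m * c)) \<longlongrightarrow> 0) at_top"
proof -
  have "LIM m at_top. c * m :> at_bot"
    by (rule filterlim_tendsto_neg_mult_at_bot[OF tendsto_const assms filterlim_ident])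
  hence "LIM m at_top. m * c :> at_bot" by (simp add: mult.commute)
  from filterlim_compose[OF exp_at_bot this] show ?thesis by simp
qed
lemma lnlim: "((\<lambda>m::real. ln a / m + \<alpha>) \<longlongrightarrow> \<alpha>) at_top"
proof -
  have "((\<lambda>m::real. ln a / m) \<longlongrightarrow> 0) at_top"
    by (rule tendsto_divide_0[OF tendsto_const filterlim_at_top_imp_at_infinity[OF filterlim_ident]])
  from tendsto_add[OF this tendsto_const[of \<alpha>]] show ?thesis by simp
qed
lemma G:
  assumes ev: "\<forall>\<^sub>F m in at_top. a * exp (m * \<alpha>) \<le> f m \<and> f m \<le> b * exp (m * \<alpha>)" and a: "a > 0"
  shows "((\<lambda>m::real. ln (f m) / m) \<longlongrightarrow> \<alpha>) at_top"
proof (rule tendsto_sandwich[OF _ _ lnlim[of a \<alpha>] lnlim[of b \<alpha>]])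
  have ev2: "\<forall>\<^sub>F m in at_top. a * exp (m * \<alpha>) \<le> f m \<and> f m \<le> b * exp (m * \<alpha>) \<and> m > (0::real)"
    using ev eventually_gt_at_top[of 0] by eventually_elim auto
  show "\<forall>\<^sub>F m in at_top. ln a / m + \<alpha> \<le> ln (f m) / m"
    using ev2
  proof eventually_elim
    case (elim m)
    have fp: "f m > 0" using elim a by (smt (verit) exp_gt_zero mult_pos_pos)
    have "ln (a * exp (m * \<alpha>)) \<le> ln (f m)" using elim a fp by (subst ln_le_cancel_iff) auto
    hence "ln a + m * \<alpha> \<le> ln (f m)" using a by (simp add: ln_mult)
    hence "(ln a + m * \<alpha>) / m \<le> ln (f m) / m" using elim by (intro divide_right_mono) auto
    moreover have "(ln a + m * \<alpha>) / m = ln a / m + \<alpha>" using elim by (simp add: field_simps)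
    ultimately show ?case by simp
  qed
  show "\<forall>\<^sub>F m in at_top. ln (f m) / m \<le> ln b / m + \<alpha>"
    using ev2
  proof eventually_elim
    case (elim m)
    have fp: "f m > 0" using elim a by (smt (verit) exp_gt_zero mult_pos_pos)
    hence bp: "b > 0" using elim by (smt (verit) exp_gt_zero zero_less_mult_pos2)
    have "ln (f m) \<le> ln (b * exp (m * \<alpha>))" using elim fp by (subst ln_le_cancel_iff) auto
    hence "ln (f m) \<le> ln b + m * \<alpha>" using bp by (simp add: ln_mult)
    hence "ln (f m) / m \<le> (ln b + m * \<alpha>) / m" using elim by (intro divide_right_mono) auto
    moreover have "(ln b + m * \<alpha>) / m = ln b / m + \<alpha>" using elim by (simp add: field_simps)
    ultimately show ?case by simp
  qed
qed

definition cr :: "real^2 \<Rightarrow> real^2 \<Rightarrow> real" where "cr a b = a$1 * b$2 - a$2 * b$1"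

lemma cr_le1: assumes "(a$1)^2 + (a$2)^2 = 1" "(b$1)^2 + (b$2)^2 = 1" shows "(cr a b)^2 \<le> 1"
proof -
  have "(cr a b)^2 + (a$1*b$1 + a$2*b$2)^2 = ((a$1)^2 + (a$2)^2) * ((b$1)^2 + (b$2)^2)"
    unfolding cr_def by algebra
  then have "(cr a b)^2 + (a$1*b$1 + a$2*b$2)^2 = 1" using assms by simp
  moreover have "(a$1*b$1 + a$2*b$2)^2 \<ge> 0" by simp
  ultimately show ?thesis by linarith
qed

lemma S_comp: "(\<Sum>k\<in>K. c k *\<^sub>R outer (w k)) $ i $ j = (\<Sum>k\<in>K. c k * (w k $ i * w k $ j))"
  by (simp add: outer_comp)

lemma det_formula:
  fixes c :: "'k \<Rightarrow> real" and w :: "'k \<Rightarrow> real^2" and K :: "'k set"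
  defines "S \<equiv> (\<Sum>k\<in>K. c k *\<^sub>R outer (w k))"
  shows "2 * (S$1$1 * S$2$2 - S$1$2 * S$2$1) = (\<Sum>k\<in>K. \<Sum>l\<in>K. c k * c l * (cr (w k) (w l))^2)"
proof -
  define F where "F k l = c k * (w k$1)^2 * (c l * (w l$2)^2)" for k l
  define G where "G k l = c k * (w k$1 * w k$2) * (c l * (w l$1 * w l$2))" for k l
  have 1: "S$1$1 * S$2$2 = (\<Sum>k\<in>K. \<Sum>l\<in>K. F k l)"
    unfolding S_def S_comp F_def by (simp add: sum_product power2_eq_square)
  have 2: "S$1$2 * S$2$1 = (\<Sum>k\<in>K. \<Sum>l\<in>K. G k l)"
    unfolding S_def S_comp G_def by (simp add: sum_product power2_eq_square mult.commute)
  have "(\<Sum>k\<in>K. \<Sum>l\<in>K. c k * c l * (cr (w k) (w l))^2) = (\<Sum>k\<in>K. \<Sum>l\<in>K. F k l + F l k - 2 * G k l)"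
    unfolding F_def G_def cr_def by (intro sum.cong refl) (simp add: power2_eq_square algebra_simps)
  also have "\<dots> = (\<Sum>k\<in>K. \<Sum>l\<in>K. F k l) + (\<Sum>k\<in>K. \<Sum>l\<in>K. F l k) - 2 * (\<Sum>k\<in>K. \<Sum>l\<in>K. G k l)"
    by (simp add: sum.distrib sum_subtractf sum_distrib_left)
  also have "(\<Sum>k\<in>K. \<Sum>l\<in>K. F l k) = (\<Sum>k\<in>K. \<Sum>l\<in>K. F k l)" by (rule sum.swap)
  finally show ?thesis using 1 2 by simp
qed


lemma main_asym:
  fixes K :: "'k set" and e :: "'k \<Rightarrow> real" and w :: "'k \<Rightarrow> real^2"
  assumes fin: "finite K" and k0: "k0 \<in> K" and ks: "ks \<in> K"
    and unit: "\<And>k. k \<in> K \<Longrightarrow> (w k$1)^2 + (w k$2)^2 = 1"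
    and lt: "\<And>k. k \<in> K \<Longrightarrow> k \<noteq> k0 \<Longrightarrow> e k < e k0"
    and crs: "cr (w k0) (w ks) \<noteq> 0"
    and up: "\<And>k l. k \<in> K \<Longrightarrow> l \<in> K \<Longrightarrow> cr (w k) (w l) \<noteq> 0 \<Longrightarrow> e k + e l \<le> e k0 + e ks"
  shows "((\<lambda>m. (1/m) *\<^sub>R mlog (\<Sum>k\<in>K. exp (m * e k) *\<^sub>R outer (w k)))
           \<longlongrightarrow> e k0 *\<^sub>R outer (w k0) + e ks *\<^sub>R (mat 1 - outer (w k0))) at_top"
proof -
  define lam where "lam = e k0"
  define mus where "mus = e ks"
  have "ks \<noteq> k0" using crs by (auto simp: cr_def)
  hence mul: "mus < lam" using lt ks unfolding lam_def mus_def by simp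
  have lek: "e k \<le> lam" if "k \<in> K" for k using lt[OF that] unfolding lam_def by (cases "k = k0") auto
  define cK where "cK = real (card K)"
  have cK1: "cK \<ge> 1" unfolding cK_def using fin k0 by (simp add: Suc_le_eq card_gt_0_iff) blast
  define S where "S m = (\<Sum>k\<in>K. exp (m * e k) *\<^sub>R outer (w k))" for m
  define t where "t m = (\<Sum>k\<in>K. exp (m * e k))" for m
  define dt where "dt m = S m$1$1 * S m$2$2 - S m$1$2 * S m$2$1" for m
  define A where "A = (cr (w k0) (w ks))^2 / 2"
  have A0: "A > 0" unfolding A_def using crs by simp
  have Ssym: "S m$2$1 = S m$1$2" for m unfolding S_def S_comp by (simp add: mult.commute)
  have Str: "S m$1$1 + S m$2$2 = t m" for m
  proof -
    have "S m$1$1 + S m$2$2 = (\<Sum>k\<in>K. exp (m * e k) * ((w k$1)^2 + (w k$2)^2))"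
      unfolding S_def S_comp by (simp add: sum.distrib[symmetric] power2_eq_square algebra_simps)
    also have "\<dots> = t m" unfolding t_def by (intro sum.cong refl) (simp add: unit)
    finally show ?thesis .
  qed
  have Sdet: "2 * dt m = (\<Sum>k\<in>K. \<Sum>l\<in>K. exp (m * e k) * exp (m * e l) * (cr (w k) (w l))^2)" for m
    unfolding dt_def S_def by (rule det_formula)
  have tlo: "exp (m * lam) \<le> t m" if "m \<ge> 0" for m
    unfolding t_def lam_def by (rule member_le_sum[OF k0]) (auto simp: fin)
  have thi: "t m \<le> cK * exp (m * lam)" if "m \<ge> 0" for m
  proof -
    have "t m \<le> of_nat (card K) * exp (m * lam)" unfolding t_def
      by (rule sum_bounded_above) (use that lek in \<open>auto intro: mult_left_mono\<close>)
    thus ?thesis by (simp add: cK_def)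
  qed
  have dlo: "A * (exp (m * lam) * exp (m * mus)) \<le> dt m" if "m \<ge> 0" for m
  proof -
    let ?f = "\<lambda>k l. exp (m * e k) * exp (m * e l) * (cr (w k) (w l))^2"
    have "?f k0 ks \<le> (\<Sum>l\<in>K. ?f k0 l)" by (rule member_le_sum[OF ks]) (auto simp: fin)
    also have "\<dots> \<le> (\<Sum>k\<in>K. \<Sum>l\<in>K. ?f k l)" by (rule member_le_sum[OF k0, where f="\<lambda>k. \<Sum>l\<in>K. ?f k l"]) (auto simp: fin intro: sum_nonneg)
    finally have "?f k0 ks \<le> 2 * dt m" using Sdet[of m] by simp
    moreover have "A * (exp (m * lam) * exp (m * mus)) = ?f k0 ks / 2" by (simp add: A_def lam_def mus_def)
    ultimately show ?thesis by linarith
  qed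
  have dhi: "dt m \<le> cK * cK / 2 * (exp (m * lam) * exp (m * mus))" if "m \<ge> 0" for m
  proof -
    let ?E = "exp (m * lam) * exp (m * mus)"
    have trm: "exp (m * e k) * exp (m * e l) * (cr (w k) (w l))^2 \<le> ?E" if "k \<in> K" "l \<in> K" for k l
    proof (cases "cr (w k) (w l) = 0")
      case True thus ?thesis by simp
    next
      case False
      have "e k + e l \<le> lam + mus" using up[OF that False] by (simp add: lam_def mus_def)
      hence "m * (e k + e l) \<le> m * (lam + mus)" using \<open>m \<ge> 0\<close> by (rule mult_left_mono)
      hence "exp (m * (e k + e l)) \<le> exp (m * (lam + mus))" by simp
      hence "exp (m * e k) * exp (m * e l) \<le> ?E" by (simp add: distrib_left exp_add)
      moreover have "(cr (w k) (w l))^2 \<le> 1" by (rule cr_le1) (use that unit in auto)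
      moreover have "exp (m * e k) * exp (m * e l) \<ge> 0" by simp
      ultimately have "exp (m * e k) * exp (m * e l) * (cr (w k) (w l))^2 \<le> exp (m * e k) * exp (m * e l) * 1"
        by (intro mult_left_mono) auto
      thus ?thesis using \<open>exp (m * e k) * exp (m * e l) \<le> ?E\<close> by linarith
    qed
    have "(\<Sum>k\<in>K. \<Sum>l\<in>K. exp (m * e k) * exp (m * e l) * (cr (w k) (w l))^2) \<le> of_nat (card K) * (of_nat (card K) * ?E)"
      by (rule sum_bounded_above, rule sum_bounded_above) (use trm in auto)
    thus ?thesis using Sdet[of m] by (simp add: cK_def)
  qed
  have disc: "t m ^ 2 - 4 * dt m \<ge> 0" for m
  proof -
    have "t m ^ 2 - 4 * dt m = (S m$1$1 - S m$2$2)^2 + 4 * (S m$1$2)^2"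
      unfolding Str[symmetric] dt_def Ssym by (simp add: power2_eq_square algebra_simps)
    thus ?thesis by simp
  qed
  define sq where "sq m = sqrt (t m ^ 2 - 4 * dt m)" for m
  define s1 where "s1 m = (t m + sq m) / 2" for m
  define s2 where "s2 m = (t m - sq m) / 2" for m
  have sqsq: "(sq m)^2 = t m ^ 2 - 4 * dt m" for m unfolding sq_def by (rule real_sqrt_pow2) (use disc[of m] in linarith)
  have sq0: "sq m \<ge> 0" for m unfolding sq_def using disc[of m] by simp
  have s12: "s1 m + s2 m = t m" "s1 m * s2 m = dt m" for m
    unfolding s1_def s2_def using sqsq[of m] by (auto simp: field_simps power2_eq_square)
  have pos: "dt m > 0" "t m > 0" if "m \<ge> 0" for m
    using dlo[OF that] A0 tlo[OF that] by (smt (verit) exp_gt_zero mult_pos_pos)+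
  have sqlt: "sq m < t m" if "m \<ge> 0" for m
  proof -
    have "(sq m)^2 < (t m)^2" using sqsq[of m] pos[OF that] by simp
    thus ?thesis using pos[OF that] sq0[of m] by (smt (verit) power_mono)
  qed
  have s1b: "t m / 2 \<le> s1 m" "s1 m \<le> t m" if "m \<ge> 0" for m
    unfolding s1_def using sqlt[OF that] sq0[of m] by auto
  have s2p: "s2 m > 0" if "m \<ge> 0" for m unfolding s2_def using sqlt[OF that] by simp
  have s1p: "s1 m > 0" if "m \<ge> 0" for m using s1b[OF that] pos[OF that] by simp
  have s2eq: "s2 m = dt m / s1 m" if "m \<ge> 0" for m using s12(2)[of m] s1p[OF that] by (simp add: field_simps)
  have s1lo: "1/2 * exp (m * lam) \<le> s1 m" if "m \<ge> 0" for m using s1b[OF that] tlo[OF that] by simp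
  have s1hi: "s1 m \<le> cK * exp (m * lam)" if "m \<ge> 0" for m using s1b[OF that] thi[OF that] by simp
  have s2lo: "A / cK * exp (m * mus) \<le> s2 m" if "m \<ge> 0" for m
  proof -
    have "A * (exp (m * lam) * exp (m * mus)) / (cK * exp (m * lam)) \<le> dt m / s1 m"
      by (rule frac_le) (use dlo[OF that] s1p[OF that] s1hi[OF that] pos[OF that] in auto)
    thus ?thesis using s2eq[OF that] cK1 by (simp add: field_simps)
  qed
  have s2hi: "s2 m \<le> cK * cK * exp (m * mus)" if "m \<ge> 0" for m
  proof -
    have "dt m / s1 m \<le> (cK * cK / 2 * (exp (m * lam) * exp (m * mus))) / (1/2 * exp (m * lam))"
      by (rule frac_le) (use dhi[OF that] s1lo[OF that] pos[OF that] cK1 in auto)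
    thus ?thesis using s2eq[OF that] by (simp add: field_simps)
  qed
  have L1: "((\<lambda>m. ln (s1 m) / m) \<longlongrightarrow> lam) at_top"
  proof (rule G[where a="1/2" and b=cK])
    show "\<forall>\<^sub>F m in at_top. 1/2 * exp (m * lam) \<le> s1 m \<and> s1 m \<le> cK * exp (m * lam)"
      by (rule eventually_mono[OF eventually_ge_at_top[of "0::real"]]) (use s1lo s1hi in blast)
  qed simp
  have L2: "((\<lambda>m. ln (s2 m) / m) \<longlongrightarrow> mus) at_top"
  proof (rule G[where a="A / cK" and b="cK * cK"])
    show "\<forall>\<^sub>F m in at_top. A / cK * exp (m * mus) \<le> s2 m \<and> s2 m \<le> cK * cK * exp (m * mus)"
      by (rule eventually_mono[OF eventually_ge_at_top[of "0::real"]]) (use s2lo s2hi in blast)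
  qed (use A0 cK1 in simp)
  have ev: "\<forall>\<^sub>F m in at_top. m > 0 \<and> s2 m < s1 m"
  proof -
    have "\<forall>\<^sub>F m in at_top. ln (s1 m) / m > (lam + mus) / 2" using L1 mul by (intro order_tendstoD(1)) auto
    moreover have "\<forall>\<^sub>F m in at_top. ln (s2 m) / m < (lam + mus) / 2" using L2 mul by (intro order_tendstoD(2)) auto
    ultimately show ?thesis using eventually_gt_at_top[of "0::real"]
    proof eventually_elim
      case (elim m)
      hence "ln (s2 m) / m < ln (s1 m) / m" by linarith
      hence "ln (s2 m) < ln (s1 m)" using elim(3) by (simp add: divide_less_cancel)
      hence "s2 m < s1 m" using s1p s2p elim(3) by simp
      with elim(3) show ?case by simp
    qed
  qed
  define P where "P m = (1/(s1 m - s2 m)) *\<^sub>R (S m - s2 m *\<^sub>R mat 1)" for m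
  have mlogS: "mlog (S m) = ln (s1 m) *\<^sub>R P m + ln (s2 m) *\<^sub>R (mat 1 - P m)" if "m > 0" "s2 m < s1 m" for m
  proof -
    have tr: "s1 m + s2 m = S m$1$1 + S m$2$2" using s12(1)[of m] Str[of m] by simp
    have de: "s1 m * s2 m = S m$1$1 * S m$2$2 - S m$1$2 * S m$2$1" using s12(2)[of m] by (simp add: dt_def)
    note sp = spec2[OF Ssym[of m] that(2) tr de, folded P_def]
    have "S m = exp (ln (s1 m)) *\<^sub>R P m + exp (ln (s2 m)) *\<^sub>R (mat 1 - P m)"
      using sp(6) s1p[of m] s2p[of m] that(1) by simp
    moreover have "ln (s2 m) < ln (s1 m)" using that s1p[of m] s2p[of m] by simp
    ultimately show ?thesis using mlog_eq[OF sp(1) sp(2) sp(3) sp(4) sp(5)] by simp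
  qed
  have klim: "((\<lambda>m. exp (m * (e k - lam))) \<longlongrightarrow> (if k = k0 then 1 else 0)) at_top" if "k \<in> K" for k
  proof (cases "k = k0")
    case True thus ?thesis by (simp add: lam_def)
  next
    case False thus ?thesis using lt[OF that False] exp_neg_lim[of "e k - lam"] by (simp add: lam_def)
  qed
  have Eexp: "exp (-(m * lam)) * exp (m * e k) = exp (m * (e k - lam))" for m k
    by (simp add: exp_add[symmetric] algebra_simps)
  have SE: "((\<lambda>m. exp (-(m * lam)) *\<^sub>R S m) \<longlongrightarrow> outer (w k0)) at_top"
  proof -
    have "((\<lambda>m. \<Sum>k\<in>K. exp (m * (e k - lam)) *\<^sub>R outer (w k)) \<longlongrightarrow> (\<Sum>k\<in>K. (if k = k0 then 1 else 0) *\<^sub>R outer (w k))) at_top"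
      by (intro tendsto_sum tendsto_scaleR klim tendsto_const)
    moreover have "(\<Sum>k\<in>K. (if k = k0 then 1 else 0) *\<^sub>R outer (w k)) = outer (w k0)"
      by (subst sum.cong[OF refl, where h="\<lambda>k. if k = k0 then outer (w k) else 0"]) (auto simp: fin k0)
    moreover have "(\<lambda>m. exp (-(m * lam)) *\<^sub>R S m) = (\<lambda>m. \<Sum>k\<in>K. exp (m * (e k - lam)) *\<^sub>R outer (w k))"
      unfolding S_def by (simp add: scaleR_sum_right Eexp[symmetric])
    ultimately show ?thesis by simp
  qed
  have tE: "((\<lambda>m. exp (-(m * lam)) * t m) \<longlongrightarrow> 1) at_top"
  proof -
    have "((\<lambda>m. \<Sum>k\<in>K. exp (m * (e k - lam))) \<longlongrightarrow> (\<Sum>k\<in>K. (if k = k0 then 1 else 0))) at_top"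
      by (intro tendsto_sum klim)
    moreover have "(\<Sum>k\<in>K. (if k = k0 then 1 else 0)) = (1::real)"
      by (simp add: fin k0)
    moreover have "(\<lambda>m. exp (-(m * lam)) * t m) = (\<lambda>m. \<Sum>k\<in>K. exp (m * (e k - lam)))"
      unfolding t_def by (simp add: sum_distrib_left Eexp[symmetric])
    ultimately show ?thesis by simp
  qed
  have s2E: "((\<lambda>m. exp (-(m * lam)) * s2 m) \<longlongrightarrow> 0) at_top"
  proof (rule tendsto_sandwich[where f="\<lambda>_. 0" and h="\<lambda>m. cK * cK * exp (m * (mus - lam))"])
    show "\<forall>\<^sub>F m in at_top. 0 \<le> exp (-(m * lam)) * s2 m"
      by (rule eventually_mono[OF eventually_ge_at_top[of "0::real"]]) (use s2p in \<open>auto intro: less_imp_le\<close>)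
    show "\<forall>\<^sub>F m in at_top. exp (-(m * lam)) * s2 m \<le> cK * cK * exp (m * (mus - lam))"
    proof (rule eventually_mono[OF eventually_ge_at_top[of "0::real"]])
      fix m :: real assume "m \<ge> 0"
      hence "exp (-(m * lam)) * s2 m \<le> exp (-(m * lam)) * (cK * cK * exp (m * mus))"
        using s2hi by (intro mult_left_mono) auto
      also have "\<dots> = cK * cK * exp (m * (mus - lam))" using Eexp[of m ks] by (simp add: mus_def)
      finally show "exp (-(m * lam)) * s2 m \<le> cK * cK * exp (m * (mus - lam))" .
    qed
    show "((\<lambda>m. cK * cK * exp (m * (mus - lam))) \<longlongrightarrow> 0) at_top"
      using tendsto_mult[OF tendsto_const exp_neg_lim[of "mus - lam"]] mul by simp
  qed simp
  define Pa where "Pa m = (1/(exp (-(m * lam)) * t m - 2 * (exp (-(m * lam)) * s2 m))) *\<^sub>R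
      (exp (-(m * lam)) *\<^sub>R S m - (exp (-(m * lam)) * s2 m) *\<^sub>R mat 1)" for m
  have PPa: "P m = Pa m" if "m > 0" "s2 m < s1 m" for m
  proof -
    have "s1 m - s2 m = t m - 2 * s2 m" using s12(1)[of m] by simp
    hence ne: "t m - 2 * s2 m \<noteq> 0" using that by simp
    have "Pa m = (1/(exp (-(m * lam)) * (t m - 2 * s2 m))) *\<^sub>R (exp (-(m * lam)) *\<^sub>R (S m - s2 m *\<^sub>R mat 1))"
      unfolding Pa_def by (simp add: algebra_simps)
    also have "\<dots> = (1/(t m - 2 * s2 m)) *\<^sub>R (S m - s2 m *\<^sub>R mat 1)"
      using ne by (simp add: scaleR_scaleR)
    finally show ?thesis unfolding P_def using \<open>s1 m - s2 m = t m - 2 * s2 m\<close> by simp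
  qed
  have PaL: "(Pa \<longlongrightarrow> outer (w k0)) at_top"
  proof -
    have "((\<lambda>m. (1/(exp (-(m * lam)) * t m - 2 * (exp (-(m * lam)) * s2 m))) *\<^sub>R
      (exp (-(m * lam)) *\<^sub>R S m - (exp (-(m * lam)) * s2 m) *\<^sub>R mat 1)) \<longlongrightarrow>
      (1 / (1 - 2 * 0)) *\<^sub>R (outer (w k0) - 0 *\<^sub>R mat 1)) at_top"
      by (intro tendsto_scaleR tendsto_divide tendsto_const tendsto_diff tendsto_mult SE tE s2E) simp
    thus ?thesis unfolding Pa_def[abs_def] by simp
  qed
  have PL: "(P \<longlongrightarrow> outer (w k0)) at_top"
    using PaL by (rule Lim_transform_eventually) (use ev PPa in \<open>auto elim!: eventually_mono\<close>)
  have fin_lim: "((\<lambda>m. (ln (s1 m) / m) *\<^sub>R P m + (ln (s2 m) / m) *\<^sub>R (mat 1 - P m)) \<longlongrightarrow>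
      lam *\<^sub>R outer (w k0) + mus *\<^sub>R (mat 1 - outer (w k0))) at_top"
    by (intro tendsto_add tendsto_scaleR L1 L2 PL tendsto_diff tendsto_const)
  have "((\<lambda>m. (1/m) *\<^sub>R mlog (S m)) \<longlongrightarrow> lam *\<^sub>R outer (w k0) + mus *\<^sub>R (mat 1 - outer (w k0))) at_top"
  proof (rule Lim_transform_eventually[OF fin_lim])
    show "\<forall>\<^sub>F m in at_top. (ln (s1 m) / m) *\<^sub>R P m + (ln (s2 m) / m) *\<^sub>R (mat 1 - P m) = (1/m) *\<^sub>R mlog (S m)"
      using ev by eventually_elim (simp add: mlogS scaleR_add_right)
  qed
  thus ?thesis unfolding S_def lam_def mus_def .
qed


lemma cr_aligned: "aligned a b \<Longrightarrow> cr b a = 0"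
  by (auto simp: aligned_def cr_def)
lemma cr_trans: "aligned a c \<Longrightarrow> aligned b c \<Longrightarrow> cr a b = 0"
  by (auto simp: aligned_def cr_def)
lemma cr_nz:
  assumes a: "(a$1)^2 + (a$2)^2 = 1" and b: "(b$1)^2 + (b$2)^2 = 1" and na: "\<not> aligned b a"
  shows "cr a b \<noteq> 0"
proof
  assume c: "cr a b = 0"
  define p where "p = a$1*b$1 + a$2*b$2"
  have "(cr a b)^2 + p^2 = ((a$1)^2 + (a$2)^2) * ((b$1)^2 + (b$2)^2)"
    unfolding cr_def p_def by algebra
  hence p2: "p^2 = 1" using a b c by simp
  have "(b$1 - p * a$1)^2 + (b$2 - p * a$2)^2 = ((b$1)^2 + (b$2)^2) - 2 * p * p + p^2 * ((a$1)^2 + (a$2)^2)"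
    unfolding p_def by algebra
  also have "\<dots> = 0" using a b p2 by (simp add: power2_eq_square)
  finally have "b$1 = p * a$1 \<and> b$2 = p * a$2" by (simp add: sum_power2_eq_zero_iff)
  moreover have "p = 1 \<or> p = -1" using p2 by (simp add: power2_eq_1_iff)
  ultimately have "b = a \<or> b = -a" by (auto simp: vec_eq_iff forall_2)
  with na show False by (simp add: aligned_def)
qed

lemma projsys_uv: "projsys (outer (uvec p)) (outer (vvec p))"
  unfolding projsys_def using sin_cos_squared_add[of p]
  by (simp add: cs; intro conjI; algebra)
lemma outer_v: "outer (vvec p) = mat 1 - outer (uvec p)"
  using sin_cos_squared_add[of p] by (simp add: cs; intro conjI; algebra)
lemma unit_u: "(uvec p$1)^2 + (uvec p$2)^2 = 1" by simp
lemma unit_v: "(vvec p$1)^2 + (vvec p$2)^2 = 1" by simp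

lemma vu_not_aligned: "\<not> aligned (vvec p) (uvec p)"
proof
  assume "aligned (vvec p) (uvec p)"
  hence "sin p = 0 \<and> cos p = 0" by (auto simp: aligned_def vec_eq_iff forall_2)
  thus False using sin_cos_squared_add[of p] by simp
qed

theorem theorem1:
  fixes n :: nat and X :: "nat \<Rightarrow> real^2^2"
    and lam mu \<phi> :: "nat \<Rightarrow> real" and mustar :: real
  assumes "n \<ge> 1"
    and spec: "\<And>i. i \<in> {1..n} \<Longrightarrow>
       X i = lam i *\<^sub>R outer (uvec (\<phi> i)) + mu i *\<^sub>R outer (vvec (\<phi> i))"
    and ord: "\<And>i. i \<in> {1..n} \<Longrightarrow> mu i \<le> lam i"
    and ang: "\<And>i. i \<in> {1..n} \<Longrightarrow> -(pi/2) \<le> \<phi> i \<and> \<phi> i \<le> pi/2"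
    and uniq_lam: "\<And>i. i \<in> {2..n} \<Longrightarrow> lam i < lam 1"
    and uniq_mu: "\<And>i. i \<in> {1..n} \<Longrightarrow> mu i < lam 1"
    and mustar_def: "mustar = Max ({lam i | i. i \<in> {2..n} \<and> \<not> aligned (uvec (\<phi> i)) (uvec (\<phi> 1))}
                          \<union> {mu i | i. i \<in> {1..n} \<and> \<not> aligned (vvec (\<phi> i)) (uvec (\<phi> 1))})"
  shows "is_LES n X (lam 1 *\<^sub>R outer (uvec (\<phi> 1)) + mustar *\<^sub>R outer (vvec (\<phi> 1)))"
proof -
  define K where "K = {1..n} \<times> (UNIV :: bool set)"
  define e where "e k = (if snd k then lam (fst k) else mu (fst k))" for k
  define w where "w k = (if snd k then uvec (\<phi> (fst k)) else vvec (\<phi> (fst k)))" for k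
  define k0 where "k0 = (1::nat, True)"
  define Set where "Set = {lam i | i. i \<in> {2..n} \<and> \<not> aligned (uvec (\<phi> i)) (uvec (\<phi> 1))}
                          \<union> {mu i | i. i \<in> {1..n} \<and> \<not> aligned (vvec (\<phi> i)) (uvec (\<phi> 1))}"
  have fin: "finite K" unfolding K_def by simp
  have k0K: "k0 \<in> K" unfolding K_def k0_def using \<open>n \<ge> 1\<close> by simp
  have unit: "(w k$1)^2 + (w k$2)^2 = 1" for k unfolding w_def by simp
  have lt: "e k < e k0" if "k \<in> K" "k \<noteq> k0" for k
  proof -
    obtain i b where k: "k = (i, b)" by force
    show ?thesis
    proof (cases b)
      case True
      hence "i \<in> {2..n}" using that k unfolding K_def k0_def by auto
      thus ?thesis using uniq_lam k True by (simp add: e_def k0_def)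
    next
      case False
      hence "i \<in> {1..n}" using that k unfolding K_def by auto
      thus ?thesis using uniq_mu k False by (simp add: e_def k0_def)
    qed
  qed
  have finSet: "finite Set" unfolding Set_def by auto
  have neSet: "Set \<noteq> {}"
  proof -
    have "\<not> aligned (vvec (\<phi> 1)) (uvec (\<phi> 1))" by (rule vu_not_aligned)
    hence "mu 1 \<in> Set" unfolding Set_def using \<open>n \<ge> 1\<close> by auto
    thus ?thesis by auto
  qed
  have ms: "mustar = Max Set" unfolding mustar_def Set_def ..
  have emax: "e k \<le> mustar" if "k \<in> K" "k \<noteq> k0" "\<not> aligned (w k) (w k0)" for k
  proof -
    obtain i b where k: "k = (i, b)" by force
    have "e k \<in> Set"
    proof (cases b)
      case True
      hence "i \<in> {2..n}" using that k unfolding K_def k0_def by auto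
      thus ?thesis using that k True unfolding Set_def e_def w_def k0_def by auto
    next
      case False
      hence "i \<in> {1..n}" using that k unfolding K_def by auto
      thus ?thesis using that k False unfolding Set_def e_def w_def k0_def by auto
    qed
    thus ?thesis unfolding ms using finSet by simp
  qed
  obtain ks where ks: "ks \<in> K" "ks \<noteq> k0" "\<not> aligned (w ks) (w k0)" "e ks = mustar"
  proof -
    have "mustar \<in> Set" unfolding ms using finSet neSet by (rule Max_in)
    then consider (a) i where "i \<in> {2..n}" "\<not> aligned (uvec (\<phi> i)) (uvec (\<phi> 1))" "mustar = lam i"
      | (b) i where "i \<in> {1..n}" "\<not> aligned (vvec (\<phi> i)) (uvec (\<phi> 1))" "mustar = mu i"
      unfolding Set_def by auto
    then show ?thesis
    proof cases
      case a thus ?thesis using that[of "(i, True)"] by (auto simp: K_def k0_def e_def w_def)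
    next
      case b thus ?thesis using that[of "(i, False)"] by (auto simp: K_def k0_def e_def w_def)
    qed
  qed
  have crs: "cr (w k0) (w ks) \<noteq> 0" by (rule cr_nz[OF unit unit ks(3)])
  have up: "e k + e l \<le> e k0 + e ks" if "k \<in> K" "l \<in> K" "cr (w k) (w l) \<noteq> 0" for k l
  proof -
    have lek: "e j \<le> e k0" if "j \<in> K" for j using lt[OF that] by (cases "j = k0") auto
    show ?thesis
    proof (cases "k = k0")
      case True
      hence "l \<noteq> k0" using that(3) by (auto simp: cr_def)
      moreover have "\<not> aligned (w l) (w k0)" using that(3) True cr_aligned by blast
      ultimately show ?thesis using emax[OF that(2)] True ks(4) by simp
    next
      case kn: False
      show ?thesis
      proof (cases "l = k0")
        case True
        have "\<not> aligned (w k) (w k0)" using that(3) True cr_aligned cr_def by (metis aligned_def minus_minus)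
        thus ?thesis using emax[OF that(1) kn] True ks(4) by simp
      next
        case ln: False
        show ?thesis
        proof (cases "aligned (w k) (w k0)")
          case True
          hence "\<not> aligned (w l) (w k0)" using that(3) cr_trans by blast
          thus ?thesis using emax[OF that(2) ln] lek[OF that(1)] ks(4) by simp
        next
          case False
          thus ?thesis using emax[OF that(1) kn] lek[OF that(2)] ks(4) by simp
        qed
      qed
    qed
  qed
  note MA = main_asym[OF fin k0K ks(1) unit lt crs up]
  have Seq: "(\<Sum>i\<in>{1..n}. mexp (m *\<^sub>R X i)) = (\<Sum>k\<in>K. exp (m * e k) *\<^sub>R outer (w k))" for m
  proof -
    have "(\<Sum>i\<in>{1..n}. mexp (m *\<^sub>R X i)) = (\<Sum>i\<in>{1..n}. \<Sum>b\<in>(UNIV::bool set). exp (m * e (i, b)) *\<^sub>R outer (w (i, b)))"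
    proof (rule sum.cong[OF refl])
      fix i assume "i \<in> {1..n}"
      hence "m *\<^sub>R X i = (m * lam i) *\<^sub>R outer (uvec (\<phi> i)) + (m * mu i) *\<^sub>R outer (vvec (\<phi> i))"
        using spec by (simp add: scaleR_add_right)
      thus "mexp (m *\<^sub>R X i) = (\<Sum>b\<in>(UNIV::bool set). exp (m * e (i, b)) *\<^sub>R outer (w (i, b)))"
        by (simp add: mexp_proj[OF projsys_uv] UNIV_bool e_def w_def add.commute)
    qed
    also have "\<dots> = (\<Sum>k\<in>K. exp (m * e k) *\<^sub>R outer (w k))"
      unfolding K_def by (simp add: sum.cartesian_product split_def)
    finally show ?thesis .
  qed
  have tgt: "e k0 *\<^sub>R outer (w k0) + e ks *\<^sub>R (mat 1 - outer (w k0)) = lam 1 *\<^sub>R outer (uvec (\<phi> 1)) + mustar *\<^sub>R outer (vvec (\<phi> 1))"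
    using ks(4) by (simp add: k0_def e_def w_def outer_v)
  show ?thesis unfolding is_LES_def Seq using MA unfolding tgt .
qed
end
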